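(* Let $d\ge 1$, let $\Omega=\operatorname{diag}(\omega_j)_{j=1}^d\in\mathbb{R}^{d\times d}$ with all $\omega_j\ge 0$, let $\omega=\min_{j:\,\omega_j>0}\omega_j$ be the smallest nonzero frequency, and let $A\in\mathbb{C}^{d\times d}$ be self-adjoint. Let $0<h\le 1$ and let $\psi_1,\phi\colon\mathbb{R}\to\mathbb{R}$ be even functions such that $\psi_1(\xi)=\operatorname{sinc}(\xi)\phi(\xi)$ for all $\xi\in\mathbb{R}$ and, for constants $c_0,c_1\ge 0$, \[ |\psi_1(\xi)|\le c_0,\qquad |\phi(\xi)|\le c_0,\qquad |\phi(\xi)-1|\le c_1|\xi|\qquad\text{for all }\xi\in\mathbb{R}. \] Set $\Psi_1=\psi_1(h\Omega)$, $\Phi=\phi(h\Omega)$. For given $q_0,\dot q_0\in\mathbb{C}^d$, define $(q_n,\dot q_n)_{n\ge 0}$ recursively by \begin{align*} q_{n+1} &= \cos(h\Omega) q_n + h\operatorname{sinc}(h\Omega) \dot{q}_n - \tfrac12 h^2 \operatorname{sinc}(h\Omega) \Psi_1 A\Phi q_n,\\ \dot{q}_{n+1} &= -\Omega \sin(h\Omega) q_n + \cos(h\Omega) \dot{q}_n - \tfrac12 h \big( \cos(h\Omega) \Psi_1 A\Phi q_n + \Psi_1 A\Phi q_{n+1}\big), \end{align*} and let $H(q,\dot q)=\tfrac12 \|\Omega q\|^2 + \tfrac12 \|\dot{q}\|^2 + \tfrac12 q^*Aq$. Then \[ \big|H(q_n,\dot{q}_n) - H(q_0,\dot{q}_0)\big|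 \le C \min\big(h,\omega^{-1}\big) + C h^2 \qquad\text{for all } n\in\mathbb{N}, \] with a constant $C$ depending only on $c_0$, $c_1$, $\|A\|$, $\|q_0\|$, $\|\Omega q_0\|$, $\|\dot{q}_0\|$ and $\|q_n\|$.
   Context: $\|\cdot\|$ is the Euclidean norm on $\mathbb{C}^d$ and, for matrices, the induced operator norm; ${}^*$ denotes conjugate transpose. $\operatorname{sinc}(\xi)=\sin(\xi)/\xi$ for $\xi\ne0$ and $\operatorname{sinc}(0)=1$. For a function $f\colon\mathbb{R}\to\mathbb{R}$, $f(h\Omega)$ denotes the diagonal matrix $\operatorname{diag}(f(h\omega_j))_{j=1}^d$. *)

theory Defs
  imports "HOL-Analysis.Analysis"
begin

text \<open>Dimension d is a natural number; vectors in C^d are functions nat => complex,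
  of which only the components j < d are relevant; d x d matrices are functions
  nat => nat => complex with only entries i,j < d relevant.
  The diagonal matrix Omega is given by its diagonal omega :: nat => real.\<close>

definition sinc :: "real \<Rightarrow> real" where
  "sinc \<xi> = (if \<xi> = 0 then 1 else sin \<xi> / \<xi>)"

definition vnorm :: "nat \<Rightarrow> (nat \<Rightarrow> complex) \<Rightarrow> real" where
  "vnorm d x = sqrt (\<Sum>j<d. (cmod (x j))\<^sup>2)"

definition mvec :: "nat \<Rightarrow> (nat \<Rightarrow> nat \<Rightarrow> complex) \<Rightarrow> (nat \<Rightarrow> complex) \<Rightarrow> (nat \<Rightarrow> complex)" where
  "mvec d A x = (\<lambda>i. \<Sum>j<d. A i j * x j)"

definition opnorm :: "nat \<Rightarrow> (nat \<Rightarrow> nat \<Rightarrow> complex) \<Rightarrow> real" where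
  "opnorm d A = Sup {vnorm d (mvec d A x) | x. vnorm d x \<le> 1}"

definition self_adjoint :: "nat \<Rightarrow> (nat \<Rightarrow> nat \<Rightarrow> complex) \<Rightarrow> bool" where
  "self_adjoint d A \<longleftrightarrow> (\<forall>i<d. \<forall>j<d. A i j = cnj (A j i))"

text \<open>Diagonal matrix f(h Omega) applied to a vector.\<close>
definition dmul :: "(real \<Rightarrow> real) \<Rightarrow> real \<Rightarrow> (nat \<Rightarrow> real) \<Rightarrow> (nat \<Rightarrow> complex) \<Rightarrow> (nat \<Rightarrow> complex)" where
  "dmul f h \<omega> x = (\<lambda>i. complex_of_real (f (h * \<omega> i)) * x i)"

definition Omul :: "(nat \<Rightarrow> real) \<Rightarrow> (nat \<Rightarrow> complex) \<Rightarrow> (nat \<Rightarrow> complex)" where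
  "Omul \<omega> x = (\<lambda>i. complex_of_real (\<omega> i) * x i)"

definition force :: "nat \<Rightarrow> (nat \<Rightarrow> real) \<Rightarrow> (nat \<Rightarrow> nat \<Rightarrow> complex) \<Rightarrow> real \<Rightarrow>
    (real \<Rightarrow> real) \<Rightarrow> (real \<Rightarrow> real) \<Rightarrow> (nat \<Rightarrow> complex) \<Rightarrow> (nat \<Rightarrow> complex)" where
  "force d \<omega> A h \<psi>1 \<phi> q = dmul \<psi>1 h \<omega> (mvec d A (dmul \<phi> h \<omega> q))"

fun traj :: "nat \<Rightarrow> (nat \<Rightarrow> real) \<Rightarrow> (nat \<Rightarrow> nat \<Rightarrow> complex) \<Rightarrow> real \<Rightarrow>
    (real \<Rightarrow> real) \<Rightarrow> (real \<Rightarrow> real) \<Rightarrow> (nat \<Rightarrow> complex) \<Rightarrow> (nat \<Rightarrow> complex) \<Rightarrow> nat \<Rightarrow>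
    (nat \<Rightarrow> complex) \<times> (nat \<Rightarrow> complex)" where
  "traj d \<omega> A h \<psi>1 \<phi> q0 p0 0 = (q0, p0)"
| "traj d \<omega> A h \<psi>1 \<phi> q0 p0 (Suc n) =
     (let (q, p) = traj d \<omega> A h \<psi>1 \<phi> q0 p0 n;
          F = force d \<omega> A h \<psi>1 \<phi>;
          q' = (\<lambda>i. dmul cos h \<omega> q i + complex_of_real h * dmul sinc h \<omega> p i
                    - complex_of_real (h\<^sup>2 / 2) * dmul sinc h \<omega> (F q) i);
          p' = (\<lambda>i. - Omul \<omega> (dmul sin h \<omega> q) i + dmul cos h \<omega> p i
                    - complex_of_real (h / 2) * (dmul cos h \<omega> (F q) i + F q' i))
      in (q', p'))"

definition energy :: "nat \<Rightarrow> (nat \<Rightarrow> real) \<Rightarrow> (nat \<Rightarrow> nat \<Rightarrow> complex) \<Rightarrow>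
    (nat \<Rightarrow> complex) \<Rightarrow> (nat \<Rightarrow> complex) \<Rightarrow> complex" where
  "energy d \<omega> A q p = complex_of_real ((vnorm d (Omul \<omega> q))\<^sup>2 / 2 + (vnorm d p)\<^sup>2 / 2)
     + (\<Sum>i<d. \<Sum>j<d. cnj (q i) * A i j * q j) / 2"

text \<open>omega^{-1} for the smallest nonzero frequency; if there is no nonzero
  frequency, omega = infinity and omega^{-1} = 0.\<close>
definition inv_min_freq :: "nat \<Rightarrow> (nat \<Rightarrow> real) \<Rightarrow> real" where
  "inv_min_freq d \<omega> = (if \<exists>j<d. \<omega> j > 0
      then 1 / Min {\<omega> j | j. j < d \<and> \<omega> j > 0} else 0)"

end

theory Submission
  imports Defs
begin

definition ip :: "nat \<Rightarrow> (nat \<Rightarrow> complex) \<Rightarrow> (nat \<Rightarrow> complex) \<Rightarrow> complex" where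
  "ip d x y = (\<Sum>j<d. cnj (x j) * y j)"

lemma ip_sym: "ip d y x = cnj (ip d x y)"
  unfolding ip_def by (simp add: mult.commute)

lemma ip_add_r: "ip d x (\<lambda>i. y i + z i) = ip d x y + ip d x z"
  unfolding ip_def by (simp add: distrib_left sum.distrib)
lemma ip_diff_r: "ip d x (\<lambda>i. y i - z i) = ip d x y - ip d x z"
  unfolding ip_def by (simp add: right_diff_distrib sum_subtractf)
lemma ip_add_l: "ip d (\<lambda>i. y i + z i) x = ip d y x + ip d z x"
  unfolding ip_def by (simp add: distrib_right sum.distrib)
lemma ip_diff_l: "ip d (\<lambda>i. y i - z i) x = ip d y x - ip d z x"
  unfolding ip_def by (simp add: left_diff_distrib sum_subtractf)
lemma ip_neg_l: "ip d (\<lambda>i. - y i) x = - ip d y x"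
  unfolding ip_def by (simp add: sum_negf)
lemma ip_smult_r: "ip d x (\<lambda>i. a * y i) = a * ip d x y"
  unfolding ip_def by (simp add: sum_distrib_left algebra_simps)
lemma ip_smult_l: "ip d (\<lambda>i. a * y i) x = cnj a * ip d y x"
  unfolding ip_def by (simp add: sum_distrib_left algebra_simps)
lemma ip_diag: "ip d (\<lambda>i. complex_of_real (r i) * x i) y = ip d x (\<lambda>i. complex_of_real (r i) * y i)"
  unfolding ip_def by (simp add: algebra_simps)
lemma ip_dmul: "ip d (dmul f h \<omega> x) y = ip d x (dmul f h \<omega> y)"
  unfolding dmul_def by (rule ip_diag)
lemma ip_herm: "self_adjoint d A \<Longrightarrow> ip d x (mvec d A y) = ip d (mvec d A x) y"
proof -
  assume sa: "self_adjoint d A"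
  have 1: "ip d x (mvec d A y) = (\<Sum>i<d. \<Sum>j<d. cnj (x i) * A i j * y j)"
    by (simp add: ip_def mvec_def sum_distrib_left mult.assoc)
  have 2: "ip d (mvec d A x) y = (\<Sum>j<d. \<Sum>i<d. cnj (A j i) * cnj (x i) * y j)"
    by (simp only: ip_def mvec_def cnj_sum complex_cnj_mult sum_distrib_right)
  have 3: "(\<Sum>j<d. \<Sum>i<d. cnj (A j i) * cnj (x i) * y j) = (\<Sum>j<d. \<Sum>i<d. cnj (x i) * A i j * y j)"
  proof (intro sum.cong refl)
    fix j i assume "j \<in> {..<d}" "i \<in> {..<d}"
    then have "A i j = cnj (A j i)" using sa unfolding self_adjoint_def by blast
    then show "cnj (A j i) * cnj (x i) * y j = cnj (x i) * A i j * y j" by simp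
  qed
  show ?thesis unfolding 1 2 3 by (rule sum.swap)
qed
lemma vnorm_ip: "(vnorm d x)\<^sup>2 = Re (ip d x x)"
proof -
  have h: "\<And>j. Re (cnj (x j) * x j) = (cmod (x j))\<^sup>2"
    using cmod_power2 by (simp add: power2_eq_square)
  have "Re (\<Sum>j<d. cnj (x j) * x j) = (\<Sum>j<d. (cmod (x j))\<^sup>2)"
    by (simp only: Re_sum h)
  moreover have "(vnorm d x)\<^sup>2 = (\<Sum>j<d. (cmod (x j))\<^sup>2)"
    unfolding vnorm_def by (simp add: sum_nonneg)
  ultimately show ?thesis unfolding ip_def by simp
qed

lemma sinc_mul: "x * sinc x = sin x"
  unfolding sinc_def by auto

definition rip :: "nat \<Rightarrow> (nat \<Rightarrow> complex) \<Rightarrow> (nat \<Rightarrow> complex) \<Rightarrow> real" where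
  "rip d x y = Re (ip d x y)"

lemma rip_sym: "rip d y x = rip d x y"
  unfolding rip_def by (subst ip_sym) simp
lemma rip_add_r: "rip d x (\<lambda>i. y i + z i) = rip d x y + rip d x z"
  unfolding rip_def by (simp add: ip_add_r)
lemma rip_diff_r: "rip d x (\<lambda>i. y i - z i) = rip d x y - rip d x z"
  unfolding rip_def by (simp add: ip_diff_r)
lemma rip_add_l: "rip d (\<lambda>i. y i + z i) x = rip d y x + rip d z x"
  unfolding rip_def by (simp add: ip_add_l)
lemma rip_diff_l: "rip d (\<lambda>i. y i - z i) x = rip d y x - rip d z x"
  unfolding rip_def by (simp add: ip_diff_l)
lemma rip_neg_l: "rip d (\<lambda>i. - y i) x = - rip d y x"
  unfolding rip_def by (simp add: ip_neg_l)
lemma rip_smult_r: "rip d x (\<lambda>i. complex_of_real a * y i) = a * rip d x y"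
  unfolding rip_def by (simp add: ip_smult_r)
lemma rip_smult_l: "rip d (\<lambda>i. complex_of_real a * y i) x = a * rip d y x"
  unfolding rip_def by (simp add: ip_smult_l)
lemma rip_dmul: "rip d (dmul f h \<omega> x) y = rip d x (dmul f h \<omega> y)"
  unfolding rip_def by (simp add: ip_dmul)
lemma vnorm_rip: "(vnorm d x)\<^sup>2 = rip d x x"
  unfolding rip_def by (rule vnorm_ip)

definition Bop :: "nat \<Rightarrow> (nat \<Rightarrow> real) \<Rightarrow> (nat \<Rightarrow> nat \<Rightarrow> complex) \<Rightarrow> real \<Rightarrow> (real \<Rightarrow> real) \<Rightarrow> (nat \<Rightarrow> complex) \<Rightarrow> (nat \<Rightarrow> complex)" where
  "Bop d \<omega> A h \<phi> x = dmul \<phi> h \<omega> (mvec d A (dmul \<phi> h \<omega> x))"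

lemma rip_Bop: "self_adjoint d A \<Longrightarrow> rip d x (Bop d \<omega> A h \<phi> y) = rip d (Bop d \<omega> A h \<phi> x) y"
proof -
  assume sa: "self_adjoint d A"
  have "ip d x (Bop d \<omega> A h \<phi> y) = ip d (dmul \<phi> h \<omega> x) (mvec d A (dmul \<phi> h \<omega> y))"
    unfolding Bop_def by (simp only: ip_dmul)
  also have "\<dots> = ip d (mvec d A (dmul \<phi> h \<omega> x)) (dmul \<phi> h \<omega> y)"
    using sa by (simp only: ip_herm)
  also have "\<dots> = ip d (Bop d \<omega> A h \<phi> x) y"
    unfolding Bop_def by (simp only: ip_dmul)
  finally show ?thesis unfolding rip_def by simp
qed

lemma Bop_add: "Bop d \<omega> A h \<phi> (\<lambda>i. x i + y i) = (\<lambda>i. Bop d \<omega> A h \<phi> x i + Bop d \<omega> A h \<phi> y i)"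
  unfolding Bop_def dmul_def mvec_def by (simp add: algebra_simps sum.distrib)

lemma force_Bop: "(\<forall>\<xi>. \<psi>1 \<xi> = sinc \<xi> * \<phi> \<xi>) \<Longrightarrow> force d \<omega> A h \<psi>1 \<phi> x = dmul sinc h \<omega> (Bop d \<omega> A h \<phi> x)"
  unfolding force_def Bop_def dmul_def by (auto simp: fun_eq_iff)

definition Hs where
  "Hs d \<omega> A h \<psi>1 \<phi> q p = (vnorm d p)\<^sup>2 / 2 + (vnorm d (Omul \<omega> q))\<^sup>2 / 2
     + rip d q (dmul cos h \<omega> (Bop d \<omega> A h \<phi> q)) / 2 - h\<^sup>2 / 8 * (vnorm d (force d \<omega> A h \<psi>1 \<phi> q))\<^sup>2"

lemma vnorm_sq: "(vnorm d x)\<^sup>2 = (\<Sum>j<d. (cmod (x j))\<^sup>2)"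
  unfolding vnorm_def by (simp add: sum_nonneg)

lemma comp_energy:
  fixes w h s c :: real and a b :: complex
  assumes "s\<^sup>2 + c\<^sup>2 = 1" "w * h * sc = s"
  shows "(cmod (- (of_real w * (of_real s * a)) + of_real c * b))\<^sup>2
     + (cmod (of_real w * (of_real c * a + of_real h * (of_real sc * b))))\<^sup>2
     = (cmod b)\<^sup>2 + (cmod (of_real w * a))\<^sup>2"
proof -
  have e: "of_real w * (of_real c * a + of_real h * (of_real sc * b)) = of_real (w*c) * a + of_real s * b"
    using assms(2) by (simp add: algebra_simps of_real_mult[symmetric] del: of_real_mult)
  have r: "(- (w * s * ar) + c * br)\<^sup>2 + (- (w * s * ai) + c * bi)\<^sup>2 + (w * c * ar + s * br)\<^sup>2 + (w * c * ai + s * bi)\<^sup>2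
      = (s\<^sup>2 + c\<^sup>2) * (br\<^sup>2 + bi\<^sup>2 + (w * ar)\<^sup>2 + (w * ai)\<^sup>2)" for ar ai br bi :: real
    by algebra
  have r1: "(- (w * s * ar) + c * br)\<^sup>2 + (- (w * s * ai) + c * bi)\<^sup>2 + (w * c * ar + s * br)\<^sup>2 + (w * c * ai + s * bi)\<^sup>2
      = br\<^sup>2 + bi\<^sup>2 + (w * ar)\<^sup>2 + (w * ai)\<^sup>2" for ar ai br bi :: real
    unfolding r assms(1) by simp
  have x1: "Re (- (of_real w * (of_real s * a)) + of_real c * b) = - (w * s * Re a) + c * Re b"
    "Im (- (of_real w * (of_real s * a)) + of_real c * b) = - (w * s * Im a) + c * Im b"
    "Re (of_real (w*c) * a + of_real s * b) = w * c * Re a + s * Re b"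
    "Im (of_real (w*c) * a + of_real s * b) = w * c * Im a + s * Im b"
    "Re (of_real w * a) = w * Re a" "Im (of_real w * a) = w * Im a"
    by simp_all
  have "(cmod (- (of_real w * (of_real s * a)) + of_real c * b))\<^sup>2
     + (cmod (of_real w * (of_real c * a + of_real h * (of_real sc * b))))\<^sup>2
     = (- (w * s * Re a) + c * Re b)\<^sup>2 + (- (w * s * Im a) + c * Im b)\<^sup>2 + ((w * c * Re a + s * Re b)\<^sup>2 + (w * c * Im a + s * Im b)\<^sup>2)"
    by (simp only: e cmod_power2 x1)
  also have "\<dots> = (Re b)\<^sup>2 + (Im b)\<^sup>2 + ((w * Re a)\<^sup>2 + (w * Im a)\<^sup>2)"
    using r1[where ar="Re a" and ai="Im a" and br = "Re b" and bi="Im b"] by (simp only: add.assoc)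
  also have "\<dots> = (cmod b)\<^sup>2 + (cmod (of_real w * a))\<^sup>2"
    by (simp only: cmod_power2 x1)
  finally show ?thesis .
qed

  
lemma comp_v1:
  fixes w h s c sc :: real and a b :: complex
  assumes "h * w * sc = s"
  shows "of_real h * (of_real sc * (- (of_real w * (of_real s * a)) + of_real c * b))
        = - (of_real (s\<^sup>2) * a) + of_real c * (of_real h * (of_real sc * b))"
proof -
  have e: "(of_real h * of_real sc * of_real w :: complex) = of_real s"
    using assms by (metis mult.commute mult.left_commute of_real_mult)
  have "of_real h * (of_real sc * (- (of_real w * (of_real s * a)) + of_real c * b))
     = - ((of_real h * of_real sc * of_real w) * of_real s * a) + of_real c * (of_real h * (of_real sc * b))"
    by (simp add: algebra_simps)
  also have "\<dots> = - (of_real (s\<^sup>2) * a) + of_real c * (of_real h * (of_real sc * b))"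
    unfolding e by (simp add: power2_eq_square)
  finally show ?thesis .
qed

lemma hws: "h * w * sinc (h * w) = sin (h * w)"
  using sinc_mul[of "h * w"] by simp

lemma step_inv:
  fixes d :: nat and \<omega> :: "nat \<Rightarrow> real" and A :: "nat \<Rightarrow> nat \<Rightarrow> complex" and h :: real
    and \<psi>1 \<phi> :: "real \<Rightarrow> real" and q p :: "nat \<Rightarrow> complex"
  assumes sa: "self_adjoint d A" and psi: "\<forall>\<xi>. \<psi>1 \<xi> = sinc \<xi> * \<phi> \<xi>"
  defines "F \<equiv> force d \<omega> A h \<psi>1 \<phi>"
  defines "q' \<equiv> (\<lambda>i. dmul cos h \<omega> q i + complex_of_real h * dmul sinc h \<omega> p i
                    - complex_of_real (h\<^sup>2 / 2) * dmul sinc h \<omega> (F q) i)"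
  defines "p' \<equiv> (\<lambda>i. - Omul \<omega> (dmul sin h \<omega> q) i + dmul cos h \<omega> p i
                    - complex_of_real (h / 2) * (dmul cos h \<omega> (F q) i + F q' i))"
  shows "Hs d \<omega> A h \<psi>1 \<phi> q' p' = Hs d \<omega> A h \<psi>1 \<phi> q p"
proof -
  let ?B = "Bop d \<omega> A h \<phi>"
  define P where "P = (\<lambda>i. p i - complex_of_real (h/2) * F q i)"
  define u where "u = (\<lambda>i. complex_of_real h * dmul sinc h \<omega> P i)"
  define Pm where "Pm = (\<lambda>i. - Omul \<omega> (dmul sin h \<omega> q) i + dmul cos h \<omega> P i)"
  have FB: "\<And>x. F x = dmul sinc h \<omega> (?B x)" using force_Bop[OF psi] F_def by simp
  have hq': "q' = (\<lambda>i. dmul cos h \<omega> q i + u i)"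
    unfolding q'_def u_def P_def dmul_def by (auto simp: fun_eq_iff algebra_simps power2_eq_square)
  have hp: "p = (\<lambda>i. P i + complex_of_real (h/2) * F q i)" unfolding P_def by simp
  have hp': "p' = (\<lambda>i. Pm i - complex_of_real (h/2) * F q' i)"
    unfolding p'_def Pm_def P_def dmul_def by (auto simp: fun_eq_iff algebra_simps)
  have n1: "(vnorm d p)\<^sup>2 = (vnorm d P)\<^sup>2 + h * rip d P (F q) + h\<^sup>2/4 * (vnorm d (F q))\<^sup>2"
    unfolding vnorm_rip hp rip_add_l rip_add_r rip_smult_l rip_smult_r
    using rip_sym[of d P "F q"] by (simp add: power2_eq_square algebra_simps)
  have n2: "(vnorm d p')\<^sup>2 = (vnorm d Pm)\<^sup>2 - h * rip d Pm (F q') + h\<^sup>2/4 * (vnorm d (F q'))\<^sup>2"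
    unfolding vnorm_rip hp' rip_diff_l rip_diff_r rip_smult_l rip_smult_r
    using rip_sym[of d Pm "F q'"] by (simp add: power2_eq_square algebra_simps)
  have en: "(vnorm d Pm)\<^sup>2 + (vnorm d (Omul \<omega> q'))\<^sup>2 = (vnorm d P)\<^sup>2 + (vnorm d (Omul \<omega> q))\<^sup>2"
    unfolding vnorm_sq sum.distrib[symmetric]
  proof (rule sum.cong[OF refl])
    fix i
    show "(cmod (Pm i))\<^sup>2 + (cmod (Omul \<omega> q' i))\<^sup>2 = (cmod (P i))\<^sup>2 + (cmod (Omul \<omega> q i))\<^sup>2"
      unfolding Pm_def hq' u_def Omul_def dmul_def
      by (rule comp_energy) (use hws[of h "\<omega> i"] in \<open>auto simp: mult.commute mult.left_commute\<close>)
  qed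
  have k1: "h * rip d P (F q) = rip d q (?B u)"
  proof -
    have "h * rip d P (F q) = h * rip d (dmul sinc h \<omega> P) (?B q)"
      unfolding FB rip_dmul ..
    also have "\<dots> = rip d u (?B q)" unfolding u_def rip_smult_l ..
    also have "\<dots> = rip d (?B u) q" using rip_Bop[OF sa] by simp
    also have "\<dots> = rip d q (?B u)" by (rule rip_sym)
    finally show ?thesis .
  qed
  have k2: "rip d q (dmul cos h \<omega> (?B q)) = rip d q (?B (dmul cos h \<omega> q))"
  proof -
    have "rip d q (dmul cos h \<omega> (?B q)) = rip d (dmul cos h \<omega> q) (?B q)"
      unfolding rip_dmul ..
    also have "\<dots> = rip d (?B (dmul cos h \<omega> q)) q" using rip_Bop[OF sa] by simp
    also have "\<dots> = rip d q (?B (dmul cos h \<omega> q))" by (rule rip_sym)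
    finally show ?thesis .
  qed
  have k3: "h * rip d P (F q) + rip d q (dmul cos h \<omega> (?B q)) = rip d q (?B q')"
    unfolding k1 k2 hq' Bop_add rip_add_r by simp
  have v1: "(\<lambda>i. complex_of_real h * dmul sinc h \<omega> Pm i)
      = (\<lambda>i. - (complex_of_real ((sin (h * \<omega> i))\<^sup>2) * q i) + dmul cos h \<omega> u i)"
  proof
    fix i
    show "complex_of_real h * dmul sinc h \<omega> Pm i
      = - (complex_of_real ((sin (h * \<omega> i))\<^sup>2) * q i) + dmul cos h \<omega> u i"
      unfolding Pm_def u_def dmul_def Omul_def
      by (rule comp_v1) (use hws[of h "\<omega> i"] in simp)
  qed
  have k4: "h * rip d Pm (F q') = rip d (\<lambda>i. - (complex_of_real ((sin (h * \<omega> i))\<^sup>2) * q i) + dmul cos h \<omega> u i) (?B q')"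
  proof -
    have "h * rip d Pm (F q') = h * rip d (dmul sinc h \<omega> Pm) (?B q')"
      unfolding FB rip_dmul ..
    also have "\<dots> = rip d (\<lambda>i. complex_of_real h * dmul sinc h \<omega> Pm i) (?B q')" unfolding rip_smult_l ..
    finally show ?thesis unfolding v1 .
  qed
  have v2: "dmul cos h \<omega> q' = (\<lambda>i. complex_of_real ((cos (h * \<omega> i))\<^sup>2) * q i + dmul cos h \<omega> u i)"
    unfolding hq' dmul_def by (auto simp: fun_eq_iff algebra_simps power2_eq_square)
  have k5: "rip d q' (dmul cos h \<omega> (?B q')) = rip d (\<lambda>i. complex_of_real ((cos (h * \<omega> i))\<^sup>2) * q i + dmul cos h \<omega> u i) (?B q')"
    unfolding rip_dmul[symmetric] v2 ..
  have v3: "(\<lambda>i. (complex_of_real ((cos (h * \<omega> i))\<^sup>2) * q i + dmul cos h \<omega> u i)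
          - (- (complex_of_real ((sin (h * \<omega> i))\<^sup>2) * q i) + dmul cos h \<omega> u i)) = q"
  proof
    fix i
    have "complex_of_real ((cos (h * \<omega> i))\<^sup>2) + complex_of_real ((sin (h * \<omega> i))\<^sup>2) = 1"
      by (simp only: of_real_add[symmetric] sin_cos_squared_add2 of_real_1)
    then show "(complex_of_real ((cos (h * \<omega> i))\<^sup>2) * q i + dmul cos h \<omega> u i)
          - (- (complex_of_real ((sin (h * \<omega> i))\<^sup>2) * q i) + dmul cos h \<omega> u i) = q i"
      by (metis (no_types, lifting) add_diff_cancel_right diff_minus_eq_add distrib_right mult_1)
  qed
  have k6: "- h * rip d Pm (F q') + rip d q' (dmul cos h \<omega> (?B q')) = rip d q (?B q')"
  proof -
    have "- h * rip d Pm (F q') + rip d q' (dmul cos h \<omega> (?B q'))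
      = rip d (\<lambda>i. complex_of_real ((cos (h * \<omega> i))\<^sup>2) * q i + dmul cos h \<omega> u i) (?B q')
       - rip d (\<lambda>i. - (complex_of_real ((sin (h * \<omega> i))\<^sup>2) * q i) + dmul cos h \<omega> u i) (?B q')"
      using k4 k5 by simp
    also have "\<dots> = rip d q (?B q')" unfolding rip_diff_l[symmetric] v3 ..
    finally show ?thesis .
  qed
  show ?thesis
    unfolding Hs_def F_def[symmetric] using n1 n2 en k3 k6 by linarith
qed

lemma vnorm_nonneg: "0 \<le> vnorm d x"
  unfolding vnorm_def by (simp add: sum_nonneg)

lemma ip_cs: "cmod (ip d x y) \<le> vnorm d x * vnorm d y"
proof -
  have "cmod (ip d x y) \<le> (\<Sum>j<d. cmod (x j) * cmod (y j))"
    unfolding ip_def using norm_sum[of "\<lambda>j. cnj (x j) * y j" "{..<d}"] by (simp add: norm_mult)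
  also have "\<dots> \<le> sqrt ((\<Sum>j<d. cmod (x j) * cmod (y j))\<^sup>2)" by simp
  also have "\<dots> \<le> sqrt ((\<Sum>j<d. (cmod (x j))\<^sup>2) * (\<Sum>j<d. (cmod (y j))\<^sup>2))"
    by (rule real_sqrt_le_mono, rule Cauchy_Schwarz_ineq_sum)
  also have "\<dots> = vnorm d x * vnorm d y" unfolding vnorm_def real_sqrt_mult ..
  finally show ?thesis .
qed

lemma rip_cs: "\<bar>rip d x y\<bar> \<le> vnorm d x * vnorm d y"
  unfolding rip_def using abs_Re_le_cmod ip_cs order_trans by blast

lemma vnorm_le:
  assumes "\<And>i. i < d \<Longrightarrow> cmod (x i) \<le> k * cmod (y i)" "0 \<le> k"
  shows "vnorm d x \<le> k * vnorm d y"
proof -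
  have "(\<Sum>j<d. (cmod (x j))\<^sup>2) \<le> (\<Sum>j<d. k\<^sup>2 * (cmod (y j))\<^sup>2)"
  proof (rule sum_mono)
    fix j assume "j \<in> {..<d}"
    then have "cmod (x j) \<le> k * cmod (y j)" using assms(1) by auto
    then have "(cmod (x j))\<^sup>2 \<le> (k * cmod (y j))\<^sup>2" by (rule power_mono) simp
    then show "(cmod (x j))\<^sup>2 \<le> k\<^sup>2 * (cmod (y j))\<^sup>2" by (simp add: power_mult_distrib)
  qed
  then have "vnorm d x \<le> sqrt (k\<^sup>2 * (\<Sum>j<d. (cmod (y j))\<^sup>2))"
    unfolding vnorm_def by (simp add: sum_distrib_left)
  also have "\<dots> = k * vnorm d y" unfolding vnorm_def real_sqrt_mult using assms(2) by simp
  finally show ?thesis .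
qed

lemma vnorm_dmul_le:
  assumes "\<And>\<xi>. \<bar>f \<xi>\<bar> \<le> c"
  shows "vnorm d (dmul f h \<omega> x) \<le> c * vnorm d x"
proof (rule vnorm_le)
  show "0 \<le> c" using assms[of 0] by linarith
  fix i show "cmod (dmul f h \<omega> x i) \<le> c * cmod (x i)"
    unfolding dmul_def norm_mult using assms[of "h * \<omega> i"] by (simp add: mult_right_mono)
qed

lemma vnorm_scale: "vnorm d (\<lambda>i. c * x i) = cmod c * vnorm d x"
proof -
  have "vnorm d (\<lambda>i. c * x i) = sqrt ((cmod c)\<^sup>2 * (\<Sum>j<d. (cmod (x j))\<^sup>2))"
    unfolding vnorm_def by (simp add: norm_mult power_mult_distrib sum_distrib_left)
  then show ?thesis unfolding vnorm_def real_sqrt_mult by simp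
qed

lemma mvec_scale: "mvec d A (\<lambda>j. c * x j) = (\<lambda>i. c * mvec d A x i)"
  unfolding mvec_def by (simp add: sum_distrib_left algebra_simps)

lemma mvec_diff: "mvec d A (\<lambda>j. x j - y j) = (\<lambda>i. mvec d A x i - mvec d A y i)"
  unfolding mvec_def by (simp add: sum_subtractf algebra_simps)

lemma mvec_bound: "\<exists>M. \<forall>x. vnorm d (mvec d A x) \<le> M * vnorm d x"
proof -
  define M where "M = sqrt (\<Sum>i<d. (vnorm d (\<lambda>j. cnj (A i j)))\<^sup>2)"
  have "vnorm d (mvec d A x) \<le> M * vnorm d x" for x
  proof -
    have e: "mvec d A x i = ip d (\<lambda>j. cnj (A i j)) x" for i
      unfolding mvec_def ip_def by simp
    have "(\<Sum>i<d. (cmod (mvec d A x i))\<^sup>2) \<le> (\<Sum>i<d. (vnorm d (\<lambda>j. cnj (A i j)))\<^sup>2 * (vnorm d x)\<^sup>2)"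
    proof (rule sum_mono)
      fix i
      have "cmod (mvec d A x i) \<le> vnorm d (\<lambda>j. cnj (A i j)) * vnorm d x" unfolding e by (rule ip_cs)
      then have "(cmod (mvec d A x i))\<^sup>2 \<le> (vnorm d (\<lambda>j. cnj (A i j)) * vnorm d x)\<^sup>2"
        by (rule power_mono) simp
      then show "(cmod (mvec d A x i))\<^sup>2 \<le> (vnorm d (\<lambda>j. cnj (A i j)))\<^sup>2 * (vnorm d x)\<^sup>2"
        by (simp add: power_mult_distrib)
    qed
    then have "vnorm d (mvec d A x) \<le> sqrt ((\<Sum>i<d. (vnorm d (\<lambda>j. cnj (A i j)))\<^sup>2) * (vnorm d x)\<^sup>2)"
      unfolding vnorm_def[of d "mvec d A x"] by (simp add: sum_distrib_right)
    also have "\<dots> = M * vnorm d x" unfolding M_def real_sqrt_mult using vnorm_nonneg by simp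
    finally show ?thesis .
  qed
  then show ?thesis by blast
qed

lemma opnorm:
  shows "vnorm d (mvec d A x) \<le> opnorm d A * vnorm d x" and "0 \<le> opnorm d A"
proof -
  let ?S = "{vnorm d (mvec d A x) | x. vnorm d x \<le> 1}"
  obtain M where M: "\<And>x. vnorm d (mvec d A x) \<le> M * vnorm d x" using mvec_bound by blast
  have bdd: "bdd_above ?S"
  proof (rule bdd_aboveI)
    fix y assume "y \<in> ?S"
    then obtain x where x: "y = vnorm d (mvec d A x)" "vnorm d x \<le> 1" by blast
    have "M * vnorm d x \<le> max M 0 * vnorm d x" by (rule mult_right_mono) (auto simp: vnorm_nonneg)
    also have "\<dots> \<le> max M 0" by (rule mult_left_le) (use x in auto)
    finally show "y \<le> max M 0" using M[of x] x by linarith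
  qed
  have mem: "vnorm d x \<le> 1 \<Longrightarrow> vnorm d (mvec d A x) \<le> opnorm d A" for x
    unfolding opnorm_def by (rule cSup_upper[OF _ bdd]) auto
  have z: "vnorm d (\<lambda>i. 0) = 0" unfolding vnorm_def by simp
  show "0 \<le> opnorm d A"
    using mem[of "\<lambda>i. 0"] z vnorm_nonneg[of d "mvec d A (\<lambda>i. 0)"] by simp
  show "vnorm d (mvec d A x) \<le> opnorm d A * vnorm d x"
  proof (cases "vnorm d x = 0")
    case True
    then show ?thesis using M[of x] vnorm_nonneg[of d "mvec d A x"] by simp
  next
    case False
    then have t: "vnorm d x > 0" using vnorm_nonneg[of d x] by simp
    let ?c = "complex_of_real (1 / vnorm d x)"
    have "vnorm d (\<lambda>i. ?c * x i) = 1" unfolding vnorm_scale using t by (simp add: norm_divide)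
    then have "vnorm d (mvec d A (\<lambda>i. ?c * x i)) \<le> opnorm d A" by (intro mem) simp
    then have "vnorm d (mvec d A x) / vnorm d x \<le> opnorm d A"
      unfolding mvec_scale vnorm_scale using t by (simp add: norm_divide)
    then show ?thesis using t by (simp add: divide_le_eq mult.commute)
  qed
qed

lemma one_minus_cos: "\<bar>1 - cos x\<bar> \<le> \<bar>x::real\<bar>"
proof -
  have "cos x = cos (2 * (x/2))" by simp
  also have "\<dots> = 1 - 2 * (sin (x/2))\<^sup>2" unfolding cos_double cos_squared_eq by simp
  finally have e: "1 - cos x = 2 * (sin (x/2))\<^sup>2" by simp
  have "(sin (x/2))\<^sup>2 \<le> \<bar>sin (x/2)\<bar>"
  proof -
    have "(sin (x/2))\<^sup>2 = \<bar>sin (x/2)\<bar> * \<bar>sin (x/2)\<bar>" by (simp add: power2_eq_square)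
    also have "\<dots> \<le> \<bar>sin (x/2)\<bar> * 1" by (rule mult_left_mono) auto
    finally show ?thesis by simp
  qed
  also have "\<dots> \<le> \<bar>x/2\<bar>" by (rule abs_sin_x_le_abs_x)
  finally show ?thesis unfolding e by simp
qed

lemma filt:
  fixes \<phi> :: "real \<Rightarrow> real"
  assumes x: "0 \<le> x" and b0: "\<forall>\<xi>. \<bar>\<phi> \<xi>\<bar> \<le> c0" and b1: "\<forall>\<xi>. \<bar>\<phi> \<xi> - 1\<bar> \<le> c1 * \<bar>\<xi>\<bar>"
    and c0: "0 \<le> c0" and c1: "0 \<le> c1"
  shows "\<bar>1 - \<phi> x * cos x\<bar> \<le> (1 + c0 + c1) * min x 1"
    and "\<bar>1 - \<phi> x\<bar> \<le> (1 + c0 + c1) * min x 1"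
proof -
  have p0: "\<bar>\<phi> x\<bar> \<le> c0" using b0 by auto
  have p1: "\<bar>\<phi> x - 1\<bar> \<le> c1 * x" using b1[rule_format, of x] x by simp
  have cb: "\<bar>1 - cos x\<bar> \<le> x" using one_minus_cos[of x] x by simp
  have "\<bar>\<phi> x * (1 - cos x)\<bar> \<le> c0 * x"
    unfolding abs_mult by (rule mult_mono) (use p0 cb x c0 in auto)
  have A1': "\<bar>1 - \<phi> x * cos x\<bar> \<le> (c0 + c1) * x"
  proof -
    have "1 - \<phi> x * cos x = (1 - \<phi> x) + \<phi> x * (1 - cos x)" by (simp add: algebra_simps)
    then have "\<bar>1 - \<phi> x * cos x\<bar> \<le> \<bar>1 - \<phi> x\<bar> + \<bar>\<phi> x * (1 - cos x)\<bar>" by simp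
    moreover have "\<bar>1 - \<phi> x\<bar> \<le> c1 * x" using p1 by simp
    ultimately show ?thesis using \<open>\<bar>\<phi> x * (1 - cos x)\<bar> \<le> c0 * x\<close> by (simp add: algebra_simps)
  qed
  have A2: "\<bar>1 - \<phi> x * cos x\<bar> \<le> 1 + c0"
  proof -
    have "\<bar>\<phi> x * cos x\<bar> \<le> c0 * 1" unfolding abs_mult by (rule mult_mono) (use p0 c0 in auto)
    then show ?thesis by simp
  qed
  show "\<bar>1 - \<phi> x * cos x\<bar> \<le> (1 + c0 + c1) * min x 1"
  proof (cases "x \<le> 1")
    case True
    then show ?thesis using A1' x c0 c1 by (simp add: min_def) (smt (verit) mult_right_mono)
  next
    case False
    then show ?thesis using A2 c1 by (simp add: min_def)
  qed
  show "\<bar>1 - \<phi> x\<bar> \<le> (1 + c0 + c1) * min x 1"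
  proof (cases "x \<le> 1")
    case True
    then show ?thesis using p1 x c0 c1 by (simp add: min_def) (smt (verit) mult_right_mono)
  next
    case False
    then show ?thesis using p0 c1 by (simp add: min_def)
  qed
qed

lemma minfreq:
  assumes i: "i < d" and w: "\<forall>j<d. 0 \<le> \<omega> j" and h: "0 < h"
  shows "min (h * \<omega> i) 1 \<le> min h (inv_min_freq d \<omega>) * \<omega> i"
proof (cases "\<omega> i = 0")
  case True
  then show ?thesis by simp
next
  case False
  then have wi: "\<omega> i > 0" using w i by force
  let ?S = "{\<omega> j | j. j < d \<and> \<omega> j > 0}"
  have ex: "\<exists>j<d. \<omega> j > 0" using wi i by blast
  have fin: "finite ?S"
  proof -
    have "?S \<subseteq> \<omega> ` {..<d}" by auto
    then show ?thesis using finite_subset by blast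
  qed
  have mem: "\<omega> i \<in> ?S" using wi i by blast
  then have ne: "?S \<noteq> {}" by blast
  have le: "Min ?S \<le> \<omega> i" using Min_le[OF fin mem] .
  have pos: "Min ?S > 0" using Min_in[OF fin ne] by auto
  have inv: "inv_min_freq d \<omega> = 1 / Min ?S" unfolding inv_min_freq_def using ex by simp
  show ?thesis
  proof (cases "h \<le> 1 / Min ?S")
    case True
    then show ?thesis unfolding inv by (simp add: min_def)
  next
    case False
    have "1 \<le> \<omega> i / Min ?S" using le pos by simp
    then show ?thesis unfolding inv using False by (simp add: min_def)
  qed
qed

definition Er where
  "Er d \<omega> A q p = (vnorm d (Omul \<omega> q))\<^sup>2 / 2 + (vnorm d p)\<^sup>2 / 2 + rip d q (mvec d A q) / 2"

lemma energy_real: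
  assumes sa: "self_adjoint d A"
  shows "energy d \<omega> A q p = complex_of_real (Er d \<omega> A q p)"
proof -
  have e: "(\<Sum>i<d. \<Sum>j<d. cnj (q i) * A i j * q j) = ip d q (mvec d A q)"
    by (simp add: ip_def mvec_def sum_distrib_left mult.assoc)
  have "cnj (ip d q (mvec d A q)) = ip d q (mvec d A q)"
    using ip_sym[of d "mvec d A q" q] ip_herm[OF sa, of q q] by simp
  then have "ip d q (mvec d A q) = complex_of_real (rip d q (mvec d A q))"
    unfolding rip_def by (simp add: complex_eq_iff)
  then show ?thesis unfolding energy_def Er_def e by simp
qed

lemma traj_inv:
  assumes sa: "self_adjoint d A" and psi: "\<forall>\<xi>. \<psi>1 \<xi> = sinc \<xi> * \<phi> \<xi>"
  shows "Hs d \<omega> A h \<psi>1 \<phi> (fst (traj d \<omega> A h \<psi>1 \<phi> q0 p0 n)) (snd (traj d \<omega> A h \<psi>1 \<phi> q0 p0 n))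
       = Hs d \<omega> A h \<psi>1 \<phi> q0 p0"
proof (induction n)
  case 0
  then show ?case by simp
next
  case (Suc n)
  obtain q p where qp: "traj d \<omega> A h \<psi>1 \<phi> q0 p0 n = (q, p)" by fastforce
  show ?case
    using Suc qp step_inv[OF sa psi, where q=q and p=p] by (simp add: Let_def)
qed

lemma inv_nonneg: "0 \<le> inv_min_freq d \<omega>"
proof (cases "\<exists>j<d. \<omega> j > 0")
  case True
  let ?S = "{\<omega> j | j. j < d \<and> \<omega> j > 0}"
  have fin: "finite ?S"
  proof -
    have "?S \<subseteq> \<omega> ` {..<d}" by auto
    then show ?thesis using finite_subset by blast
  qed
  have ne: "?S \<noteq> {}" using True by blast
  have pos: "Min ?S > 0" using Min_in[OF fin ne] by auto
  then show ?thesis unfolding inv_min_freq_def using True by (auto intro: less_imp_le)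
next
  case False
  then show ?thesis unfolding inv_min_freq_def by auto
qed

lemma Bop_bound:
  assumes b0: "\<forall>\<xi>. \<bar>\<phi> \<xi>\<bar> \<le> c0"
  shows "vnorm d (Bop d \<omega> A h \<phi> q) \<le> c0 * (opnorm d A * (c0 * vnorm d q))"
proof -
  have c0: "0 \<le> c0" using b0 by (metis abs_ge_zero order_trans)
  have "vnorm d (Bop d \<omega> A h \<phi> q) \<le> c0 * vnorm d (mvec d A (dmul \<phi> h \<omega> q))"
    unfolding Bop_def by (rule vnorm_dmul_le) (use b0 in auto)
  also have "\<dots> \<le> c0 * (opnorm d A * vnorm d (dmul \<phi> h \<omega> q))"
    by (rule mult_left_mono[OF opnorm(1) c0])
  also have "\<dots> \<le> c0 * (opnorm d A * (c0 * vnorm d q))"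
    by (intro mult_left_mono opnorm(2) c0 vnorm_dmul_le) (use b0 in auto)
  finally show ?thesis .
qed

lemma force_bound:
  assumes b0: "\<forall>\<xi>. \<bar>\<phi> \<xi>\<bar> \<le> c0" and bp: "\<forall>\<xi>. \<bar>\<psi>1 \<xi>\<bar> \<le> c0"
  shows "vnorm d (force d \<omega> A h \<psi>1 \<phi> q) \<le> c0 * (opnorm d A * (c0 * vnorm d q))"
proof -
  have c0: "0 \<le> c0" using b0 by (metis abs_ge_zero order_trans)
  have "vnorm d (force d \<omega> A h \<psi>1 \<phi> q) \<le> c0 * vnorm d (mvec d A (dmul \<phi> h \<omega> q))"
    unfolding force_def by (rule vnorm_dmul_le) (use bp in auto)
  also have "\<dots> \<le> c0 * (opnorm d A * vnorm d (dmul \<phi> h \<omega> q))"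
    by (rule mult_left_mono[OF opnorm(1) c0])
  also have "\<dots> \<le> c0 * (opnorm d A * (c0 * vnorm d q))"
    by (intro mult_left_mono opnorm(2) c0 vnorm_dmul_le) (use b0 in auto)
  finally show ?thesis .
qed

lemma cosB_bound:
  assumes b0: "\<forall>\<xi>. \<bar>\<phi> \<xi>\<bar> \<le> c0"
  shows "\<bar>rip d q (dmul cos h \<omega> (Bop d \<omega> A h \<phi> q))\<bar> \<le> c0\<^sup>2 * opnorm d A * (vnorm d q)\<^sup>2"
proof -
  have "\<bar>rip d q (dmul cos h \<omega> (Bop d \<omega> A h \<phi> q))\<bar> \<le> vnorm d q * vnorm d (dmul cos h \<omega> (Bop d \<omega> A h \<phi> q))"
    by (rule rip_cs)
  also have "\<dots> \<le> vnorm d q * (1 * vnorm d (Bop d \<omega> A h \<phi> q))"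
    by (intro mult_left_mono vnorm_nonneg vnorm_dmul_le) auto
  also have "\<dots> \<le> vnorm d q * (c0 * (opnorm d A * (c0 * vnorm d q)))"
    using Bop_bound[OF b0] by (intro mult_left_mono vnorm_nonneg) auto
  finally show ?thesis by (simp add: power2_eq_square algebra_simps)
qed

lemma D_bound:
  fixes d :: nat and \<omega> :: "nat \<Rightarrow> real" and A :: "nat \<Rightarrow> nat \<Rightarrow> complex" and h c0 c1 :: real
    and \<psi>1 \<phi> :: "real \<Rightarrow> real" and q p :: "nat \<Rightarrow> complex"
  assumes w: "\<forall>j<d. 0 \<le> \<omega> j" and h: "0 < h"
    and b0: "\<forall>\<xi>. \<bar>\<phi> \<xi>\<bar> \<le> c0" and bp: "\<forall>\<xi>. \<bar>\<psi>1 \<xi>\<bar> \<le> c0" and b1: "\<forall>\<xi>. \<bar>\<phi> \<xi> - 1\<bar> \<le> c1 * \<bar>\<xi>\<bar>"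
    and c0: "0 \<le> c0" and c1: "0 \<le> c1"
  shows "\<bar>Er d \<omega> A q p - Hs d \<omega> A h \<psi>1 \<phi> q p\<bar>
    \<le> (1 + c0) * (1 + c0 + c1) * opnorm d A * vnorm d q * vnorm d (Omul \<omega> q) / 2 * min h (inv_min_freq d \<omega>)
      + c0 ^ 4 * (opnorm d A)\<^sup>2 * (vnorm d q)\<^sup>2 / 8 * h\<^sup>2"
proof -
  define a where "a = opnorm d A"
  define m where "m = min h (inv_min_freq d \<omega>)"
  define K0 where "K0 = 1 + c0 + c1"
  define nq where "nq = vnorm d q"
  define nO where "nO = vnorm d (Omul \<omega> q)"
  define g where "g = dmul \<phi> h \<omega> (dmul cos h \<omega> q)"
  define f where "f = dmul \<phi> h \<omega> q"
  have a0: "0 \<le> a" unfolding a_def by (rule opnorm(2))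
  have m0: "0 \<le> m" unfolding m_def using h inv_nonneg[of d \<omega>] by simp
  have K00: "0 \<le> K0" unfolding K0_def using c0 c1 by simp
  have nq0: "0 \<le> nq" unfolding nq_def by (rule vnorm_nonneg)
  have nO0: "0 \<le> nO" unfolding nO_def by (rule vnorm_nonneg)
  have e1: "rip d q (dmul cos h \<omega> (Bop d \<omega> A h \<phi> q)) = rip d g (mvec d A f)"
    unfolding g_def f_def Bop_def by (simp only: rip_dmul[symmetric])
  have e2: "rip d q (mvec d A q) - rip d g (mvec d A f)
      = rip d (\<lambda>i. q i - g i) (mvec d A q) + rip d g (mvec d A (\<lambda>i. q i - f i))"
    unfolding rip_diff_l mvec_diff rip_diff_r by simp
  have gq: "vnorm d g \<le> c0 * nq"
  proof -
    have "vnorm d g \<le> c0 * vnorm d (dmul cos h \<omega> q)"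
      unfolding g_def by (rule vnorm_dmul_le) (use b0 in auto)
    also have "\<dots> \<le> c0 * (1 * nq)"
      unfolding nq_def by (intro mult_left_mono c0 vnorm_dmul_le) auto
    finally show ?thesis by simp
  qed
  have comp: "\<bar>1 - \<phi> (h * \<omega> i) * cos (h * \<omega> i)\<bar> * cmod (q i) \<le> K0 * m * cmod (Omul \<omega> q i)
        \<and> \<bar>1 - \<phi> (h * \<omega> i)\<bar> * cmod (q i) \<le> K0 * m * cmod (Omul \<omega> q i)" if i: "i < d" for i
  proof -
    have wi: "0 \<le> \<omega> i" using w i by auto
    have x0: "0 \<le> h * \<omega> i" using h wi by simp
    have mf: "min (h * \<omega> i) 1 \<le> m * \<omega> i" unfolding m_def by (rule minfreq[OF i w h])
    have km: "K0 * min (h * \<omega> i) 1 * cmod (q i) \<le> K0 * m * cmod (Omul \<omega> q i)"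
    proof -
      have "K0 * min (h * \<omega> i) 1 * cmod (q i) \<le> K0 * (m * \<omega> i) * cmod (q i)"
        by (intro mult_right_mono mult_left_mono mf K00) auto
      also have "\<dots> = K0 * m * cmod (Omul \<omega> q i)"
        unfolding Omul_def norm_mult using wi by simp
      finally show ?thesis .
    qed
    have f1: "\<bar>1 - \<phi> (h * \<omega> i) * cos (h * \<omega> i)\<bar> \<le> K0 * min (h * \<omega> i) 1"
      unfolding K0_def by (rule filt(1)[OF x0 b0 b1 c0 c1])
    have f2: "\<bar>1 - \<phi> (h * \<omega> i)\<bar> \<le> K0 * min (h * \<omega> i) 1"
      unfolding K0_def by (rule filt(2)[OF x0 b0 b1 c0 c1])
    show ?thesis
      using mult_right_mono[OF f1 norm_ge_zero[of "q i"]] mult_right_mono[OF f2 norm_ge_zero[of "q i"]] km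
      by linarith
  qed
  have qg: "vnorm d (\<lambda>i. q i - g i) \<le> K0 * m * nO"
    unfolding nO_def
  proof (rule vnorm_le)
    show "0 \<le> K0 * m" using K00 m0 by simp
    fix i assume i: "i < d"
    have "q i - g i = complex_of_real (1 - \<phi> (h * \<omega> i) * cos (h * \<omega> i)) * q i"
      unfolding g_def dmul_def by (simp add: algebra_simps)
    then have "cmod (q i - g i) = \<bar>1 - \<phi> (h * \<omega> i) * cos (h * \<omega> i)\<bar> * cmod (q i)"
      by (simp only: norm_mult norm_of_real)
    then show "cmod (q i - g i) \<le> K0 * m * cmod (Omul \<omega> q i)"
      using comp[OF i] by linarith
  qed
  have qf: "vnorm d (\<lambda>i. q i - f i) \<le> K0 * m * nO"
    unfolding nO_def
  proof (rule vnorm_le)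
    show "0 \<le> K0 * m" using K00 m0 by simp
    fix i assume i: "i < d"
    have "q i - f i = complex_of_real (1 - \<phi> (h * \<omega> i)) * q i"
      unfolding f_def dmul_def by (simp add: algebra_simps)
    then have "cmod (q i - f i) = \<bar>1 - \<phi> (h * \<omega> i)\<bar> * cmod (q i)"
      by (simp only: norm_mult norm_of_real)
    then show "cmod (q i - f i) \<le> K0 * m * cmod (Omul \<omega> q i)"
      using comp[OF i] by linarith
  qed
  have t1: "\<bar>rip d (\<lambda>i. q i - g i) (mvec d A q)\<bar> \<le> (K0 * m * nO) * (a * nq)"
  proof -
    have "\<bar>rip d (\<lambda>i. q i - g i) (mvec d A q)\<bar> \<le> vnorm d (\<lambda>i. q i - g i) * vnorm d (mvec d A q)"
      by (rule rip_cs)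
    also have "\<dots> \<le> (K0 * m * nO) * (a * nq)"
      unfolding a_def nq_def by (intro mult_mono qg[unfolded nq_def] opnorm(1) vnorm_nonneg) (use K00 m0 nO0 in auto)
    finally show ?thesis .
  qed
  have t2: "\<bar>rip d g (mvec d A (\<lambda>i. q i - f i))\<bar> \<le> (c0 * nq) * (a * (K0 * m * nO))"
  proof -
    have "\<bar>rip d g (mvec d A (\<lambda>i. q i - f i))\<bar> \<le> vnorm d g * vnorm d (mvec d A (\<lambda>i. q i - f i))"
      by (rule rip_cs)
    also have "\<dots> \<le> (c0 * nq) * (a * vnorm d (\<lambda>i. q i - f i))"
      unfolding a_def by (intro mult_mono gq opnorm(1) vnorm_nonneg) (use c0 nq0 in auto)
    also have "\<dots> \<le> (c0 * nq) * (a * (K0 * m * nO))"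
      by (intro mult_left_mono qf a0) (use c0 nq0 in auto)
    finally show ?thesis .
  qed
  have fb: "vnorm d (force d \<omega> A h \<psi>1 \<phi> q) \<le> c0 * (a * (c0 * nq))"
    unfolding a_def nq_def by (rule force_bound[OF b0 bp])
  have fb2: "(vnorm d (force d \<omega> A h \<psi>1 \<phi> q))\<^sup>2 \<le> c0 ^ 4 * a\<^sup>2 * nq\<^sup>2"
  proof -
    have "(vnorm d (force d \<omega> A h \<psi>1 \<phi> q))\<^sup>2 \<le> (c0 * (a * (c0 * nq)))\<^sup>2"
      by (rule power_mono[OF fb vnorm_nonneg])
    also have "\<dots> = c0 ^ 4 * a\<^sup>2 * nq\<^sup>2" by (simp add: power_mult_distrib power2_eq_square algebra_simps power4_eq_xxxx)
    finally show ?thesis .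
  qed
  have diff: "Er d \<omega> A q p - Hs d \<omega> A h \<psi>1 \<phi> q p
      = (rip d (\<lambda>i. q i - g i) (mvec d A q) + rip d g (mvec d A (\<lambda>i. q i - f i))) / 2
        + h\<^sup>2 / 8 * (vnorm d (force d \<omega> A h \<psi>1 \<phi> q))\<^sup>2"
    unfolding Er_def Hs_def e1 e2[symmetric] by (simp add: field_simps)
  have "\<bar>Er d \<omega> A q p - Hs d \<omega> A h \<psi>1 \<phi> q p\<bar>
      \<le> (\<bar>rip d (\<lambda>i. q i - g i) (mvec d A q)\<bar> + \<bar>rip d g (mvec d A (\<lambda>i. q i - f i))\<bar>) / 2
        + h\<^sup>2 / 8 * (vnorm d (force d \<omega> A h \<psi>1 \<phi> q))\<^sup>2"
  proof -
    have gen: "\<bar>(x + y) / 2 + z\<bar> \<le> (\<bar>x\<bar> + \<bar>y\<bar>) / 2 + z" if "0 \<le> z" for x y z :: real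
    proof -
      have "\<bar>(x + y) / 2 + z\<bar> \<le> \<bar>(x + y) / 2\<bar> + \<bar>z\<bar>" by (rule abs_triangle_ineq)
      also have "\<dots> = \<bar>x + y\<bar> / 2 + z" using that by simp
      also have "\<dots> \<le> (\<bar>x\<bar> + \<bar>y\<bar>) / 2 + z" using abs_triangle_ineq[of x y] by simp
      finally show ?thesis .
    qed
    show ?thesis unfolding diff by (rule gen) simp
  qed
  also have "\<dots> \<le> ((K0 * m * nO) * (a * nq) + (c0 * nq) * (a * (K0 * m * nO))) / 2
        + h\<^sup>2 / 8 * (c0 ^ 4 * a\<^sup>2 * nq\<^sup>2)"
    using t1 t2 fb2 by (intro add_mono divide_right_mono mult_left_mono) auto
  also have "\<dots> = (1 + c0) * K0 * a * nq * nO / 2 * m + c0 ^ 4 * a\<^sup>2 * nq\<^sup>2 / 8 * h\<^sup>2"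
    by (simp add: algebra_simps)
  finally show ?thesis unfolding a_def m_def K0_def nq_def nO_def .
qed

lemma Om_bound:
  fixes d :: nat and \<omega> :: "nat \<Rightarrow> real" and A :: "nat \<Rightarrow> nat \<Rightarrow> complex" and h c0 :: real
    and \<psi>1 \<phi> :: "real \<Rightarrow> real" and q p q0 p0 :: "nat \<Rightarrow> complex"
  assumes hs: "Hs d \<omega> A h \<psi>1 \<phi> q p = Hs d \<omega> A h \<psi>1 \<phi> q0 p0"
    and b0: "\<forall>\<xi>. \<bar>\<phi> \<xi>\<bar> \<le> c0" and bp: "\<forall>\<xi>. \<bar>\<psi>1 \<xi>\<bar> \<le> c0" and c0: "0 \<le> c0"
    and h: "0 < h" and h1: "h \<le> 1"
  shows "(vnorm d (Omul \<omega> q))\<^sup>2 \<le> (vnorm d p0)\<^sup>2 + (vnorm d (Omul \<omega> q0))\<^sup>2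
     + c0\<^sup>2 * opnorm d A * (vnorm d q0)\<^sup>2 + c0\<^sup>2 * opnorm d A * (vnorm d q)\<^sup>2
     + c0 ^ 4 * (opnorm d A)\<^sup>2 * (vnorm d q)\<^sup>2 / 4"
proof -
  define a where "a = opnorm d A"
  have r: "\<bar>rip d q (dmul cos h \<omega> (Bop d \<omega> A h \<phi> q))\<bar> \<le> c0\<^sup>2 * a * (vnorm d q)\<^sup>2"
    unfolding a_def by (rule cosB_bound[OF b0])
  have r0: "\<bar>rip d q0 (dmul cos h \<omega> (Bop d \<omega> A h \<phi> q0))\<bar> \<le> c0\<^sup>2 * a * (vnorm d q0)\<^sup>2"
    unfolding a_def by (rule cosB_bound[OF b0])
  have fb: "vnorm d (force d \<omega> A h \<psi>1 \<phi> q) \<le> c0 * (a * (c0 * vnorm d q))"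
    unfolding a_def by (rule force_bound[OF b0 bp])
  have fb2: "(vnorm d (force d \<omega> A h \<psi>1 \<phi> q))\<^sup>2 \<le> c0 ^ 4 * a\<^sup>2 * (vnorm d q)\<^sup>2"
  proof -
    have "(vnorm d (force d \<omega> A h \<psi>1 \<phi> q))\<^sup>2 \<le> (c0 * (a * (c0 * vnorm d q)))\<^sup>2"
      by (rule power_mono[OF fb vnorm_nonneg])
    also have "\<dots> = c0 ^ 4 * a\<^sup>2 * (vnorm d q)\<^sup>2"
      by (simp add: power_mult_distrib power2_eq_square algebra_simps power4_eq_xxxx)
    finally show ?thesis .
  qed
  have hh: "h\<^sup>2 * (vnorm d (force d \<omega> A h \<psi>1 \<phi> q))\<^sup>2 \<le> (vnorm d (force d \<omega> A h \<psi>1 \<phi> q))\<^sup>2"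
  proof (rule mult_left_le_one_le)
    show "h\<^sup>2 \<le> 1" using h h1 by (simp add: power_le_one)
  qed auto
  have f0: "0 \<le> h\<^sup>2 * (vnorm d (force d \<omega> A h \<psi>1 \<phi> q0))\<^sup>2" by simp
  have p0: "0 \<le> (vnorm d p)\<^sup>2" by simp
  have f1: "0 \<le> (vnorm d (force d \<omega> A h \<psi>1 \<phi> q0))\<^sup>2" by simp
  have f0': "0 \<le> h\<^sup>2 * (vnorm d (force d \<omega> A h \<psi>1 \<phi> q0))\<^sup>2" by (rule mult_nonneg_nonneg[OF _ f1]) simp
  have hs': "(vnorm d p)\<^sup>2 / 2 + (vnorm d (Omul \<omega> q))\<^sup>2 / 2 + rip d q (dmul cos h \<omega> (Bop d \<omega> A h \<phi> q)) / 2
     - h\<^sup>2 / 8 * (vnorm d (force d \<omega> A h \<psi>1 \<phi> q))\<^sup>2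
     = (vnorm d p0)\<^sup>2 / 2 + (vnorm d (Omul \<omega> q0))\<^sup>2 / 2 + rip d q0 (dmul cos h \<omega> (Bop d \<omega> A h \<phi> q0)) / 2
     - h\<^sup>2 / 8 * (vnorm d (force d \<omega> A h \<psi>1 \<phi> q0))\<^sup>2"
    using hs unfolding Hs_def .
  show ?thesis
    using hs' abs_le_D2[OF r] abs_le_D1[OF r0] fb2 hh f0' p0 unfolding a_def[symmetric] by linarith
qed

definition Cst :: "real \<Rightarrow> real \<Rightarrow> real \<Rightarrow> real \<Rightarrow> real \<Rightarrow> real \<Rightarrow> real \<Rightarrow> real" where
  "Cst c0 c1 a nq0 nOq0 np0 nqn =
     (1 + c0) * (1 + c0 + c1) * a * (nqn * sqrt (np0\<^sup>2 + nOq0\<^sup>2 + c0\<^sup>2 * a * nq0\<^sup>2 + c0\<^sup>2 * a * nqn\<^sup>2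
        + c0 ^ 4 * a\<^sup>2 * nqn\<^sup>2 / 4) + nq0 * nOq0) / 2
     + c0 ^ 4 * a\<^sup>2 * (nqn\<^sup>2 + nq0\<^sup>2) / 8"

theorem theorem4:
  shows "\<exists>C :: real \<Rightarrow> real \<Rightarrow> real \<Rightarrow> real \<Rightarrow> real \<Rightarrow> real \<Rightarrow> real \<Rightarrow> real.
    \<forall>(d::nat) (\<omega>::nat \<Rightarrow> real) (A::nat \<Rightarrow> nat \<Rightarrow> complex) (h::real)
      (\<psi>1::real \<Rightarrow> real) (\<phi>::real \<Rightarrow> real) (c0::real) (c1::real)
      (q0::nat \<Rightarrow> complex) (p0::nat \<Rightarrow> complex) (n::nat).
      d \<ge> 1 \<and> (\<forall>j<d. \<omega> j \<ge> 0) \<and> self_adjoint d A \<and> 0 < h \<and> h \<le> 1 \<and>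
      (\<forall>\<xi>. \<psi>1 (- \<xi>) = \<psi>1 \<xi>) \<and> (\<forall>\<xi>. \<phi> (- \<xi>) = \<phi> \<xi>) \<and>
      (\<forall>\<xi>. \<psi>1 \<xi> = sinc \<xi> * \<phi> \<xi>) \<and> c0 \<ge> 0 \<and> c1 \<ge> 0 \<and>
      (\<forall>\<xi>. \<bar>\<psi>1 \<xi>\<bar> \<le> c0) \<and> (\<forall>\<xi>. \<bar>\<phi> \<xi>\<bar> \<le> c0) \<and> (\<forall>\<xi>. \<bar>\<phi> \<xi> - 1\<bar> \<le> c1 * \<bar>\<xi>\<bar>)
      \<longrightarrow>
      (let (q, p) = traj d \<omega> A h \<psi>1 \<phi> q0 p0 n;
           K = C c0 c1 (opnorm d A) (vnorm d q0) (vnorm d (Omul \<omega> q0)) (vnorm d p0) (vnorm d q)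
       in cmod (energy d \<omega> A q p - energy d \<omega> A q0 p0)
            \<le> K * min h (inv_min_freq d \<omega>) + K * h\<^sup>2)"
proof (rule exI[of _ Cst], intro allI impI)
  fix d :: nat and \<omega> :: "nat \<Rightarrow> real" and A :: "nat \<Rightarrow> nat \<Rightarrow> complex" and h :: real
    and \<psi>1 \<phi> :: "real \<Rightarrow> real" and c0 c1 :: real and q0 p0 :: "nat \<Rightarrow> complex" and n :: nat
  assume H: "d \<ge> 1 \<and> (\<forall>j<d. \<omega> j \<ge> 0) \<and> self_adjoint d A \<and> 0 < h \<and> h \<le> 1 \<and>
      (\<forall>\<xi>. \<psi>1 (- \<xi>) = \<psi>1 \<xi>) \<and> (\<forall>\<xi>. \<phi> (- \<xi>) = \<phi> \<xi>) \<and>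
      (\<forall>\<xi>. \<psi>1 \<xi> = sinc \<xi> * \<phi> \<xi>) \<and> c0 \<ge> 0 \<and> c1 \<ge> 0 \<and>
      (\<forall>\<xi>. \<bar>\<psi>1 \<xi>\<bar> \<le> c0) \<and> (\<forall>\<xi>. \<bar>\<phi> \<xi>\<bar> \<le> c0) \<and> (\<forall>\<xi>. \<bar>\<phi> \<xi> - 1\<bar> \<le> c1 * \<bar>\<xi>\<bar>)"
  then have w: "\<forall>j<d. 0 \<le> \<omega> j" and sa: "self_adjoint d A" and h: "0 < h" and h1: "h \<le> 1"
    and psi: "\<forall>\<xi>. \<psi>1 \<xi> = sinc \<xi> * \<phi> \<xi>" and c0: "0 \<le> c0" and c1: "0 \<le> c1"
    and bp: "\<forall>\<xi>. \<bar>\<psi>1 \<xi>\<bar> \<le> c0" and b0: "\<forall>\<xi>. \<bar>\<phi> \<xi>\<bar> \<le> c0"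
    and b1: "\<forall>\<xi>. \<bar>\<phi> \<xi> - 1\<bar> \<le> c1 * \<bar>\<xi>\<bar>"
    by auto
  obtain q p where tr: "traj d \<omega> A h \<psi>1 \<phi> q0 p0 n = (q, p)" by fastforce
  define a where "a = opnorm d A"
  define m where "m = min h (inv_min_freq d \<omega>)"
  define nq0 where "nq0 = vnorm d q0"
  define nO0 where "nO0 = vnorm d (Omul \<omega> q0)"
  define np0 where "np0 = vnorm d p0"
  define nq where "nq = vnorm d q"
  define nO where "nO = vnorm d (Omul \<omega> q)"
  define W where "W = np0\<^sup>2 + nO0\<^sup>2 + c0\<^sup>2 * a * nq0\<^sup>2 + c0\<^sup>2 * a * nq\<^sup>2 + c0 ^ 4 * a\<^sup>2 * nq\<^sup>2 / 4"
  define K1 where "K1 = (1 + c0) * (1 + c0 + c1) * a * (nq * sqrt W + nq0 * nO0) / 2"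
  define K2 where "K2 = c0 ^ 4 * a\<^sup>2 * (nq\<^sup>2 + nq0\<^sup>2) / 8"
  have a0: "0 \<le> a" unfolding a_def by (rule opnorm(2))
  have m0: "0 \<le> m" unfolding m_def using h inv_nonneg[of d \<omega>] by simp
  have nn: "0 \<le> nq0" "0 \<le> nO0" "0 \<le> nq" "0 \<le> nO"
    unfolding nq0_def nO0_def nq_def nO_def by (rule vnorm_nonneg)+
  have hs: "Hs d \<omega> A h \<psi>1 \<phi> q p = Hs d \<omega> A h \<psi>1 \<phi> q0 p0"
  proof -
    have "Hs d \<omega> A h \<psi>1 \<phi> (fst (traj d \<omega> A h \<psi>1 \<phi> q0 p0 n)) (snd (traj d \<omega> A h \<psi>1 \<phi> q0 p0 n))
       = Hs d \<omega> A h \<psi>1 \<phi> q0 p0" by (rule traj_inv[OF sa psi])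
    then show ?thesis using tr by simp
  qed
  have OW: "nO \<le> sqrt W"
    unfolding nO_def W_def np0_def nO0_def nq0_def nq_def a_def
    by (rule real_le_rsqrt, rule Om_bound[OF hs b0 bp c0 h h1])
  have Dn: "\<bar>Er d \<omega> A q p - Hs d \<omega> A h \<psi>1 \<phi> q p\<bar>
      \<le> (1 + c0) * (1 + c0 + c1) * a * nq * nO / 2 * m + c0 ^ 4 * a\<^sup>2 * nq\<^sup>2 / 8 * h\<^sup>2"
    unfolding a_def nq_def nO_def m_def by (rule D_bound[OF w h b0 bp b1 c0 c1])
  have D0: "\<bar>Er d \<omega> A q0 p0 - Hs d \<omega> A h \<psi>1 \<phi> q0 p0\<bar>
      \<le> (1 + c0) * (1 + c0 + c1) * a * nq0 * nO0 / 2 * m + c0 ^ 4 * a\<^sup>2 * nq0\<^sup>2 / 8 * h\<^sup>2"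
    unfolding a_def nq0_def nO0_def m_def by (rule D_bound[OF w h b0 bp b1 c0 c1])
  have cf: "0 \<le> (1 + c0) * (1 + c0 + c1) * a" using c0 c1 a0 by simp
  have mono1: "(1 + c0) * (1 + c0 + c1) * a * nq * nO \<le> (1 + c0) * (1 + c0 + c1) * a * nq * sqrt W"
    using mult_left_mono[OF OW mult_nonneg_nonneg[OF cf nn(3)]] by simp
  have "\<bar>Er d \<omega> A q p - Er d \<omega> A q0 p0\<bar>
      \<le> \<bar>Er d \<omega> A q p - Hs d \<omega> A h \<psi>1 \<phi> q p\<bar> + \<bar>Er d \<omega> A q0 p0 - Hs d \<omega> A h \<psi>1 \<phi> q0 p0\<bar>"
    using hs by linarith
  also have "\<dots> \<le> K1 * m + K2 * h\<^sup>2"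
  proof -
    have "(1 + c0) * (1 + c0 + c1) * a * nq * nO / 2 * m \<le> (1 + c0) * (1 + c0 + c1) * a * nq * sqrt W / 2 * m"
      using mono1 m0 by (intro mult_right_mono divide_right_mono) auto
    then show ?thesis using Dn D0 unfolding K1_def K2_def by (simp add: algebra_simps add_divide_distrib)
  qed
  also have "\<dots> \<le> (K1 + K2) * m + (K1 + K2) * h\<^sup>2"
  proof -
    have sW: "0 \<le> sqrt W" using OW nn(4) by linarith
    have k1: "0 \<le> K1" unfolding K1_def
      by (intro divide_nonneg_nonneg mult_nonneg_nonneg add_nonneg_nonneg cf) (use nn sW in auto)
    have k2: "0 \<le> K2" unfolding K2_def using c0 by simp
    have "0 \<le> K2 * m" "0 \<le> K1 * h\<^sup>2" using k1 k2 m0 by simp_all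
    then show ?thesis by (simp add: algebra_simps)
  qed
  finally have main: "\<bar>Er d \<omega> A q p - Er d \<omega> A q0 p0\<bar> \<le> (K1 + K2) * m + (K1 + K2) * h\<^sup>2" .
  have KC: "Cst c0 c1 (opnorm d A) (vnorm d q0) (vnorm d (Omul \<omega> q0)) (vnorm d p0) (vnorm d q) = K1 + K2"
    unfolding Cst_def K1_def K2_def W_def a_def nq0_def nO0_def np0_def nq_def ..
  have en: "cmod (energy d \<omega> A q p - energy d \<omega> A q0 p0) = \<bar>Er d \<omega> A q p - Er d \<omega> A q0 p0\<bar>"
    unfolding energy_real[OF sa] of_real_diff[symmetric] norm_of_real ..
  show "let (q, p) = traj d \<omega> A h \<psi>1 \<phi> q0 p0 n;
           K = Cst c0 c1 (opnorm d A) (vnorm d q0) (vnorm d (Omul \<omega> q0)) (vnorm d p0) (vnorm d q)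
       in cmod (energy d \<omega> A q p - energy d \<omega> A q0 p0)
            \<le> K * min h (inv_min_freq d \<omega>) + K * h\<^sup>2"
    unfolding tr Let_def prod.case KC en using main unfolding m_def .
qed

end
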